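(* Let $\zeta=\zeta_0r_0+\dots+\zeta_mr_m$ and $1\le j\le n$. Then $\lambda\mapsto\mathrm{HC}([y_j,x_j])(\lambda)$ is a polynomial on $\mathfrak{h}^*$ of degree at most $m$ whose homogeneous component of degree $m$ (its highest term) is \[ \zeta_m\sum_{\mathbf{p}}(\mathbf{p}_j+1)\prod_{i=1}^n\lambda_i^{\mathbf{p}_i}, \] the sum being over all $\mathbf{p}=(\mathbf{p}_1,\dots,\mathbf{p}_n)\in\mathbb{Z}_{\ge0}^n$ with $\mathbf{p}_1+\dots+\mathbf{p}_n=m$.
   Context: Fix $n\ge1$; $e_{ij}$ matrix units of $\mathfrak{gl}_n$; $V$ with basis $y_1,\dots,y_n$, $e_{ij}y_k=\delta_{jk}y_i$; $V^*$ dual with dual basis $x_1,\dots,x_n$. Identify $S(\mathfrak{gl}_n)$ with polynomial functions of $A\in\mathfrak{gl}_n$ via the trace form; $\mathrm{Sym}$ is symmetrization $S(\mathfrak{gl}_n)\to U(\mathfrak{gl}_n)$. For $j\ge0$, $r_j(y,x)\in U(\mathfrak{gl}_n)$ is $\mathrm{Sym}$ of the coefficient of $\tau^j$ in $(x,(1-\tau A)^{-1}y)\det(1-\tau A)^{-1}$. $H_\zeta(\mathfrak{gl}_n)$ is the quotient of $U(\mathfrak{gl}_n)\ltimes T(V\oplus V^* )$ by $[x,x']=[y,y']=0$, $[y,x]=\sum_j\zeta_jr_j(y,x)$. $\mathfrak{h}$ is the diagonal subalgebra and $\lambda\in\mathfrak{h}^*$ is identified with $(\lambda_1,\dots,\lambda_n)$,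 $\lambda_i=\lambda(e_{ii})$. $\mathfrak{n}^+=\mathrm{span}(e_{ij}\,(i<j),y_k)$, $\mathfrak{n}^-=\mathrm{span}(e_{ij}\,(i>j),x_k)$, and $\mathrm{HC}:H_\zeta(\mathfrak{gl}_n)\to U(\mathfrak{h})=\mathbb{C}[\mathfrak{h}^*]$ is the projection along $H_\zeta(\mathfrak{gl}_n)=(H_\zeta\mathfrak{n}^++\mathfrak{n}^-H_\zeta)\oplus U(\mathfrak{h})$. *)

theory Defs
  imports "Jordan_Normal_Form.Determinant" "HOL-Computational_Algebra.Formal_Power_Series"
begin

text \<open>Indices are 0-based: the paper's e_{ij} with 1 <= i,j <= n is the letter (i-1, j-1).
 A word w = [(a1,b1),...,(ak,bk)] denotes the product e_{a1 b1} ... e_{ak bk} in U(gl_n).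
 Elements of U(gl_n) are represented by finitely supported coefficient functions on words
 (elements of the free algebra); HC below is well defined on the quotient U(gl_n).\<close>

type_synonym word = "(nat \<times> nat) list"

text \<open>Harish-Chandra projection of a word, evaluated at lambda:
 the U(h)-component of the word w.r.t. U = (n^- U + U n^+) (+) U(h), as polynomial function.
 Rules: u e_ab in U n^+ for a<b; HC(u h) = HC(u) h; for a>b,
 u e_ab = e_ab u + [u, e_ab] with e_ab u in n^- U and
 [e_cd, e_ab] = delta_da e_cb - delta_bc e_ad.\<close>
function hcw :: "(nat \<Rightarrow> complex) \<Rightarrow> word \<Rightarrow> complex" where
  "hcw lam w =
    (if w = [] then 1
     else if fst (last w) < snd (last w) then 0
     else if fst (last w) = snd (last w) then lam (fst (last w)) * hcw lam (butlast w)
     else (\<Sum>i<length (butlast w).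
        (if snd (butlast w ! i) = fst (last w)
         then hcw lam ((butlast w)[i := (fst (butlast w ! i), snd (last w))]) else 0)
      - (if snd (last w) = fst (butlast w ! i)
         then hcw lam ((butlast w)[i := (fst (last w), snd (butlast w ! i))]) else 0)))"
  by pat_completeness auto
termination
  by (relation "measure (\<lambda>(lam, w). length w)") auto

definition HC :: "(word \<Rightarrow> complex) \<Rightarrow> (nat \<Rightarrow> complex) \<Rightarrow> complex" where
  "HC u lam = (\<Sum>w\<in>{w. u w \<noteq> 0}. u w * hcw lam w)"

definition words :: "nat \<Rightarrow> nat \<Rightarrow> word set" where
  "words n d = {w. length w = d \<and> set w \<subseteq> {..<n} \<times> {..<n}}"

text \<open>Coefficient of tau^k in (x_j, (1 - tau A)^{-1} y_j) det(1 - tau A)^{-1}, as a function of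
 the n x n matrix A; (x_j,(1-tau A)^{-1} y_j) = sum_a tau^a (A^a)_{jj}.\<close>
definition coef_fun :: "nat \<Rightarrow> nat \<Rightarrow> nat \<Rightarrow> complex mat \<Rightarrow> complex" where
  "coef_fun n j k A = fps_nth
     (Abs_fps (\<lambda>a. (A ^\<^sub>m a) $$ (j, j)) *
      inverse (det (mat n n (\<lambda>(i, l). (if i = l then 1 else 0) - fps_const (A $$ (i, l)) * fps_X))))
     k"

text \<open>Under the trace-form identification, the generator e_{ab} of S(gl_n) is the coordinate
 function A |-> A_{ba}. For a homogeneous degree-d polynomial f, the coefficient of the word w
 in Sym(f) is (1/d!) D_{w_1}...D_{w_d} f, the iterated partial derivative, computed by the
 polarization formula sum_{S} (-1)^(d-|S|) f(sum_{l in S} E_{b_l a_l}).\<close>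
definition polar :: "nat \<Rightarrow> nat \<Rightarrow> (complex mat \<Rightarrow> complex) \<Rightarrow> word \<Rightarrow> complex" where
  "polar n d f w = (\<Sum>S\<in>Pow {..<d}. (-1) ^ (d - card S) *
      f (mat n n (\<lambda>(i, l). of_nat (card {q\<in>S. w ! q = (l, i)}))))"

text \<open>r_k(y_j, x_j) = Sym(coefficient of tau^k), an element of U(gl_n).\<close>
definition r_elem :: "nat \<Rightarrow> nat \<Rightarrow> nat \<Rightarrow> word \<Rightarrow> complex" where
  "r_elem n j k w = (if w \<in> words n k then polar n k (coef_fun n j k) w / fact k else 0)"

definition bracket_yx :: "nat \<Rightarrow> nat \<Rightarrow> (nat \<Rightarrow> complex) \<Rightarrow> nat \<Rightarrow> word \<Rightarrow> complex" where
  "bracket_yx n m zeta j w = (\<Sum>k\<le>m. zeta k * r_elem n j k w)"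

definition multi_idx :: "nat \<Rightarrow> nat \<Rightarrow> (nat \<Rightarrow> nat) set" where
  "multi_idx n d = {p. (\<forall>i\<ge>n. p i = 0) \<and> sum p {..<n} = d}"

definition poly_deg_lt :: "nat \<Rightarrow> nat \<Rightarrow> ((nat \<Rightarrow> complex) \<Rightarrow> complex) \<Rightarrow> bool" where
  "poly_deg_lt n d F \<longleftrightarrow> (\<exists>c. \<forall>lam. F lam =
      (\<Sum>p\<in>{p. (\<forall>i\<ge>n. p i = 0) \<and> sum p {..<n} < d}. c p * (\<Prod>i<n. lam i ^ p i)))"

end

theory Submission
  imports Defs "HOL-Combinatorics.Permutations"
begin


inductive polyd :: "nat \<Rightarrow> nat \<Rightarrow> ((nat \<Rightarrow> complex) \<Rightarrow> complex) \<Rightarrow> bool" for n where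
  pconst: "polyd n (Suc d) (\<lambda>_. c)"
| pmul: "polyd n d F \<Longrightarrow> a < n \<Longrightarrow> polyd n (Suc d) (\<lambda>l. l a * F l)"
| padd: "polyd n d F \<Longrightarrow> polyd n d G \<Longrightarrow> polyd n d (\<lambda>l. F l + G l)"
| psmul: "polyd n d F \<Longrightarrow> polyd n d (\<lambda>l. c * F l)"
| pzero: "polyd n d (\<lambda>_. 0)"
| pmono: "polyd n d F \<Longrightarrow> d \<le> e \<Longrightarrow> polyd n e F"

lemma psub: "polyd n d F \<Longrightarrow> polyd n d G \<Longrightarrow> polyd n d (\<lambda>l. F l - G l)"
  using padd[of n d F "\<lambda>l. (-1) * G l"] psmul[of n d G "-1"] by simp

lemma psum: "finite S \<Longrightarrow> (\<And>x. x \<in> S \<Longrightarrow> polyd n d (F x)) \<Longrightarrow> polyd n d (\<lambda>l. \<Sum>x\<in>S. F x l)"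
proof (induction S rule: finite_induct)
  case empty then show ?case by (simp add: pzero)
next
  case (insert x S) then show ?case using padd[of n d "F x" "\<lambda>l. \<Sum>x\<in>S. F x l"] by simp
qed

lemma pif: "(C \<Longrightarrow> polyd n d F) \<Longrightarrow> polyd n d (\<lambda>l. if C then F l else 0)"
  by (cases C) (simp_all add: pzero)

definition Pd :: "nat \<Rightarrow> nat \<Rightarrow> (nat \<Rightarrow> nat) set" where
  "Pd n d = {p. (\<forall>i\<ge>n. p i = 0) \<and> sum p {..<n} < d}"

lemma finite_Pd: "finite (Pd n d)"
proof -
  have "Pd n d \<subseteq> {f. \<forall>x. (x \<in> {..<n} \<longrightarrow> f x \<in> {..<d}) \<and> (x \<notin> {..<n} \<longrightarrow> f x = 0)}"
  proof
    fix p assume p: "p \<in> Pd n d"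
    have "p x < d" if "x < n" for x
    proof -
      have "p x \<le> sum p {..<n}" using that by (intro member_le_sum) auto
      then show ?thesis using p by (auto simp: Pd_def)
    qed
    then show "p \<in> {f. \<forall>x. (x \<in> {..<n} \<longrightarrow> f x \<in> {..<d}) \<and> (x \<notin> {..<n} \<longrightarrow> f x = 0)}"
      using p by (auto simp: Pd_def)
  qed
  then show ?thesis by (rule finite_subset) (intro finite_set_of_finite_funs, auto)
qed

lemma pdl_iff: "poly_deg_lt n d F \<longleftrightarrow> (\<exists>c. \<forall>lam. F lam = (\<Sum>p\<in>Pd n d. c p * (\<Prod>i<n. lam i ^ p i)))"
  unfolding poly_deg_lt_def Pd_def by simp

lemma polyd_sound: "polyd n d F \<Longrightarrow> poly_deg_lt n d F"
proof (induction rule: polyd.induct)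
  case (pconst d c)
  let ?z = "(\<lambda>_. 0) :: nat \<Rightarrow> nat"
  have z: "?z \<in> Pd n (Suc d)" by (simp add: Pd_def)
  show ?case unfolding pdl_iff
  proof (intro exI allI)
    fix lam
    have "(\<Sum>p\<in>Pd n (Suc d). (if p = ?z then c else 0) * (\<Prod>i<n. lam i ^ p i))
       = (\<Sum>p\<in>Pd n (Suc d). (if p = ?z then c * (\<Prod>i<n. lam i ^ p i) else 0))"
      by (rule sum.cong) auto
    also have "\<dots> = c" by (subst sum.delta[OF finite_Pd]) (use z in simp)
    finally show "c = (\<Sum>p\<in>Pd n (Suc d). (if p = ?z then c else 0) * (\<Prod>i<n. lam i ^ p i))" by simp
  qed
next
  case (pmul d F a)
  then obtain c where c: "\<And>lam. F lam = (\<Sum>p\<in>Pd n d. c p * (\<Prod>i<n. lam i ^ p i))"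
    unfolding pdl_iff by blast
  define sh where "sh = (\<lambda>p::nat\<Rightarrow>nat. p(a := Suc (p a)))"
  have inj: "inj_on sh (Pd n d)"
  proof (rule inj_onI)
    fix p q assume "sh p = sh q"
    then have "p x = q x" for x unfolding sh_def by (metis fun_upd_apply nat.inject)
    then show "p = q" by blast
  qed
  have sub: "sh ` Pd n d \<subseteq> Pd n (Suc d)"
  proof
    fix q assume "q \<in> sh ` Pd n d"
    then obtain p where p: "p \<in> Pd n d" "q = sh p" by blast
    have "sum q {..<n} = Suc (sum p {..<n})"
      using p \<open>a < n\<close> by (simp add: sh_def sum.remove[of "{..<n}" a] )
    then show "q \<in> Pd n (Suc d)" using p \<open>a < n\<close> by (auto simp: Pd_def sh_def)
  qed
  have mon: "lam a * (\<Prod>i<n. lam i ^ p i) = (\<Prod>i<n. lam i ^ sh p i)" for lam p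
    using \<open>a < n\<close> by (simp add: sh_def prod.remove[of "{..<n}" a] mult.assoc)
  show ?case unfolding pdl_iff
  proof (intro exI allI)
    fix lam
    have "lam a * F lam = (\<Sum>p\<in>Pd n d. c p * (\<Prod>i<n. lam i ^ sh p i))"
      by (simp add: c sum_distrib_left mon[symmetric] mult_ac)
    also have "\<dots> = (\<Sum>q\<in>sh ` Pd n d. c (the_inv_into (Pd n d) sh q) * (\<Prod>i<n. lam i ^ q i))"
      by (simp add: sum.reindex[OF inj] the_inv_into_f_f[OF inj])
    also have "\<dots> = (\<Sum>q\<in>Pd n (Suc d). (if q \<in> sh ` Pd n d then c (the_inv_into (Pd n d) sh q) else 0) * (\<Prod>i<n. lam i ^ q i))"
      by (rule sum.mono_neutral_cong_left) (use sub finite_Pd in auto)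
    finally show "lam a * F lam = \<dots>" .
  qed
next
  case (padd d F G)
  then obtain c1 c2 where "\<And>lam. F lam = (\<Sum>p\<in>Pd n d. c1 p * (\<Prod>i<n. lam i ^ p i))"
    "\<And>lam. G lam = (\<Sum>p\<in>Pd n d. c2 p * (\<Prod>i<n. lam i ^ p i))"
    unfolding pdl_iff by blast
  then show ?case unfolding pdl_iff
    by (intro exI[of _ "\<lambda>p. c1 p + c2 p"]) (simp add: distrib_right sum.distrib)
next
  case (psmul d F c)
  then obtain c1 where "\<And>lam. F lam = (\<Sum>p\<in>Pd n d. c1 p * (\<Prod>i<n. lam i ^ p i))"
    unfolding pdl_iff by blast
  then show ?case unfolding pdl_iff
    by (intro exI[of _ "\<lambda>p. c * c1 p"]) (simp add: sum_distrib_left mult_ac)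
next
  case (pzero d)
  then show ?case unfolding pdl_iff by (intro exI[of _ "\<lambda>p. 0"]) simp
next
  case (pmono d F e)
  then obtain c1 where c1: "\<And>lam. F lam = (\<Sum>p\<in>Pd n d. c1 p * (\<Prod>i<n. lam i ^ p i))"
    unfolding pdl_iff by blast
  have sub: "Pd n d \<subseteq> Pd n e" using pmono by (auto simp: Pd_def)
  show ?case unfolding pdl_iff
  proof (intro exI allI)
    fix lam
    show "F lam = (\<Sum>p\<in>Pd n e. (if p \<in> Pd n d then c1 p else 0) * (\<Prod>i<n. lam i ^ p i))"
      unfolding c1 by (rule sum.mono_neutral_cong_left) (use sub finite_Pd in auto)
  qed
qed



declare hcw.simps[simp del]

definition dg :: "word \<Rightarrow> (nat \<Rightarrow> complex) \<Rightarrow> complex" where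
  "dg w lam = (if \<forall>x\<in>set w. fst x = snd x then (\<Prod>x\<leftarrow>w. lam (fst x)) else 0)"

lemma hcw_Nil: "hcw lam [] = 1"
  by (subst hcw.simps) (simp cong: if_cong)

lemma hcw_snoc: "hcw lam (v @ [(a,b)]) = (if a < b then 0 else if a = b then lam a * hcw lam v else
   (\<Sum>i<length v. (if snd (v!i) = a then hcw lam (v[i := (fst (v!i), b)]) else 0)
      - (if b = fst (v!i) then hcw lam (v[i := (a, snd (v!i))]) else 0)))"
  by (subst hcw.simps) (simp cong: if_cong)

lemma prodl_polyd: "set w \<subseteq> {..<n}\<times>{..<n} \<Longrightarrow> polyd n (Suc (length w)) (\<lambda>lam. \<Prod>x\<leftarrow>w. lam (fst x))"
proof (induction w)
  case Nil then show ?case using pconst[of n 0 1] by simp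
next
  case (Cons x w) then show ?case using pmul[of n "Suc (length w)" _ "fst x"] by (auto simp: mem_Times_iff)
qed

lemma dg_polyd: "set w \<subseteq> {..<n}\<times>{..<n} \<Longrightarrow> polyd n (Suc (length w)) (dg w)"
proof -
  assume "set w \<subseteq> {..<n}\<times>{..<n}"
  then have "polyd n (Suc (length w)) (\<lambda>lam. if \<forall>x\<in>set w. fst x = snd x then (\<Prod>x\<leftarrow>w. lam (fst x)) else 0)"
    by (intro pif prodl_polyd)
  then show ?thesis by (simp add: dg_def[abs_def])
qed

lemma hcw_main: "set w \<subseteq> {..<n}\<times>{..<n} \<Longrightarrow> polyd n (length w) (\<lambda>lam. hcw lam w - dg w lam)"
proof (induction "length w" arbitrary: w rule: less_induct)
  case less
  show ?case
  proof (cases w rule: rev_exhaust)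
    case Nil then show ?thesis by (simp add: hcw_Nil dg_def pzero)
  next
    case (snoc v x)
    obtain a b where x: "x = (a,b)" by fastforce
    have vs: "set v \<subseteq> {..<n}\<times>{..<n}" and ab: "a < n" "b < n" using less.prems snoc x by auto
    have deg: "polyd n (Suc (length v)) (\<lambda>lam. hcw lam u)" if "length u = length v" "set u \<subseteq> {..<n}\<times>{..<n}" for u
    proof -
      have "polyd n (length u) (\<lambda>lam. hcw lam u - dg u lam)" using less.hyps[of u] that snoc by simp
      then have "polyd n (Suc (length v)) (\<lambda>lam. hcw lam u - dg u lam)" using that by (auto intro: pmono)
      moreover have "polyd n (Suc (length v)) (dg u)" using dg_polyd[OF that(2)] that by simp
      ultimately show ?thesis using padd by fastforce
    qed
    consider "a < b" | "a = b" | "b < a" by linarith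
    then show ?thesis
    proof cases
      case 1 then show ?thesis using snoc x by (simp add: hcw_snoc dg_def pzero)
    next
      case 2
      have "polyd n (length v) (\<lambda>lam. hcw lam v - dg v lam)" using less.hyps[of v] vs snoc by simp
      then have "polyd n (Suc (length v)) (\<lambda>lam. lam a * (hcw lam v - dg v lam))" using ab by (intro pmul)
      moreover have "hcw lam w - dg w lam = lam a * (hcw lam v - dg v lam)" for lam
        using snoc x 2 by (simp add: hcw_snoc dg_def algebra_simps)
      ultimately show ?thesis using snoc by simp
    next
      case 3
      have dz: "dg w lam = 0" for lam using snoc x 3 by (simp add: dg_def)
      have "polyd n (Suc (length v)) (\<lambda>lam. \<Sum>i<length v. (if snd (v!i) = a then hcw lam (v[i := (fst (v!i), b)]) else 0)
      - (if b = fst (v!i) then hcw lam (v[i := (a, snd (v!i))]) else 0))"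
      proof (intro psum psub pif deg)
        fix i assume i: "i \<in> {..<length v}"
        then have "v ! i \<in> set v" by simp
        then have "fst (v!i) < n" "snd (v!i) < n" using vs by auto
        then show "set (v[i := (fst (v!i), b)]) \<subseteq> {..<n}\<times>{..<n}" "set (v[i := (a, snd (v!i))]) \<subseteq> {..<n}\<times>{..<n}"
          using vs ab set_update_subset_insert[of v i] by fastforce+
      qed auto
      then show ?thesis using snoc x 3 by (simp add: hcw_snoc dg_def)
    qed
  qed
qed

lemma hcw_deg: "set w \<subseteq> {..<n}\<times>{..<n} \<Longrightarrow> polyd n (Suc (length w)) (\<lambda>lam. hcw lam w)"
proof -
  assume s: "set w \<subseteq> {..<n}\<times>{..<n}"
  have "polyd n (Suc (length w)) (\<lambda>lam. hcw lam w - dg w lam)" using hcw_main[OF s] by (auto intro: pmono)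
  from padd[OF this dg_polyd[OF s]] show ?thesis by simp
qed



lemma finite_words: "finite (words n k)"
proof -
  have "words n k = {xs. set xs \<subseteq> {..<n}\<times>{..<n} \<and> length xs = k}" by (auto simp: words_def)
  then show ?thesis by (simp add: finite_lists_length_eq)
qed

lemma words_set: "w \<in> words n k \<Longrightarrow> set w \<subseteq> {..<n}\<times>{..<n}" and words_len: "w \<in> words n k \<Longrightarrow> length w = k"
  by (auto simp: words_def)

lemma HC_bracket: "HC (bracket_yx n m zeta j) lam = (\<Sum>k\<le>m. zeta k * (\<Sum>w\<in>words n k. r_elem n j k w * hcw lam w))"
proof -
  define W where "W = (\<Union>k\<le>m. words n k)"
  have fW: "finite W" unfolding W_def by (simp add: finite_words)
  have sub: "{w. bracket_yx n m zeta j w \<noteq> 0} \<subseteq> W"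
  proof
    fix w assume "w \<in> {w. bracket_yx n m zeta j w \<noteq> 0}"
    then obtain k where "k \<le> m" "r_elem n j k w \<noteq> 0" unfolding bracket_yx_def
      by (metis (mono_tags, lifting) mem_Collect_eq mult_zero_right sum.neutral atMost_iff)
    then show "w \<in> W" unfolding W_def r_elem_def by (auto split: if_splits)
  qed
  have "HC (bracket_yx n m zeta j) lam = (\<Sum>w\<in>W. bracket_yx n m zeta j w * hcw lam w)"
    unfolding HC_def by (rule sum.mono_neutral_left[OF fW sub]) auto
  also have "\<dots> = (\<Sum>k\<le>m. \<Sum>w\<in>W. zeta k * (r_elem n j k w * hcw lam w))"
    unfolding bracket_yx_def sum_distrib_right by (subst sum.swap) (simp add: mult_ac)
  also have "\<dots> = (\<Sum>k\<le>m. zeta k * (\<Sum>w\<in>words n k. r_elem n j k w * hcw lam w))"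
  proof (rule sum.cong[OF refl])
    fix k assume k: "k \<in> {..m}"
    have "(\<Sum>w\<in>W. zeta k * (r_elem n j k w * hcw lam w)) = (\<Sum>w\<in>words n k. zeta k * (r_elem n j k w * hcw lam w))"
      by (rule sum.mono_neutral_right[OF fW]) (use k in \<open>auto simp: W_def r_elem_def\<close>)
    then show "(\<Sum>w\<in>W. zeta k * (r_elem n j k w * hcw lam w)) = zeta k * (\<Sum>w\<in>words n k. r_elem n j k w * hcw lam w)"
      by (simp add: sum_distrib_left)
  qed
  finally show ?thesis .
qed



lemma prod_indic: "finite A \<Longrightarrow> (\<Prod>x\<in>A. if P x then (1::complex) else 0) = (if \<forall>x\<in>A. P x then 1 else 0)"
  by (induction rule: finite_induct) auto

lemma card_surj:
  assumes fA: "finite A" and fC: "finite C" and cc: "card A = card C"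
  shows "card {\<phi>\<in>PiE A (\<lambda>_. C). \<phi> ` A = C} = fact (card C)"
proof -
  obtain h where h: "bij_betw h C A" using finite_same_card_bij[OF fC fA] cc by auto
  define F where "F \<phi> = (\<lambda>c. if c \<in> C then \<phi> (h c) else c)" for \<phi> :: "'a \<Rightarrow> 'b"
  define F' where "F' \<pi> = restrict (\<lambda>a. \<pi> (inv_into C h a)) A" for \<pi> :: "'b \<Rightarrow> 'b"
  have hinv1: "inv_into C h (h c) = c" if "c \<in> C" for c using h that by (simp add: bij_betw_def inv_into_f_f)
  have hinv2: "h (inv_into C h a) = a" if "a \<in> A" for a using h that by (simp add: bij_betw_def f_inv_into_f)
  have hinv3: "inv_into C h a \<in> C" if "a \<in> A" for a using h that by (metis bij_betw_def inv_into_into)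
  have hC: "h c \<in> A" if "c \<in> C" for c using h that by (auto simp: bij_betw_def)
  have "bij_betw F {\<phi>\<in>PiE A (\<lambda>_. C). \<phi> ` A = C} {\<pi>. \<pi> permutes C}"
  proof (rule bij_betw_byWitness[where f'=F'])
    show "\<forall>\<phi>\<in>{\<phi>\<in>PiE A (\<lambda>_. C). \<phi> ` A = C}. F' (F \<phi>) = \<phi>"
    proof
      fix \<phi> assume "\<phi> \<in> {\<phi>\<in>PiE A (\<lambda>_. C). \<phi> ` A = C}"
      then have "\<phi> \<in> extensional A" by (auto simp: PiE_def)
      then show "F' (F \<phi>) = \<phi>" unfolding F'_def F_def
        by (intro ext) (auto simp: hinv2 hinv3 extensional_def)
    qed
    show "\<forall>\<pi>\<in>{\<pi>. \<pi> permutes C}. F (F' \<pi>) = \<pi>"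
    proof
      fix \<pi> assume "\<pi> \<in> {\<pi>. \<pi> permutes C}"
      then have "\<pi> x = x" if "x \<notin> C" for x using that by (simp add: permutes_def)
      then show "F (F' \<pi>) = \<pi>" unfolding F'_def F_def by (intro ext) (auto simp: hC hinv1)
    qed
    show "F ` {\<phi>\<in>PiE A (\<lambda>_. C). \<phi> ` A = C} \<subseteq> {\<pi>. \<pi> permutes C}"
    proof
      fix \<pi> assume "\<pi> \<in> F ` {\<phi>\<in>PiE A (\<lambda>_. C). \<phi> ` A = C}"
      then obtain \<phi> where \<phi>: "\<phi> \<in> PiE A (\<lambda>_. C)" "\<phi> ` A = C" and pi: "\<pi> = F \<phi>" by auto
      have img: "\<pi> ` C = C"
      proof -
        have "\<pi> ` C = \<phi> ` (h ` C)" unfolding pi F_def by (auto simp: image_iff)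
        also have "h ` C = A" using h by (simp add: bij_betw_def)
        finally show ?thesis using \<phi> by simp
      qed
      have "inj_on \<pi> C" using fC img by (simp add: eq_card_imp_inj_on)
      then have "bij_betw \<pi> C C" using img by (simp add: bij_betw_def)
      then show "\<pi> \<in> {\<pi>. \<pi> permutes C}" by (auto intro!: bij_imp_permutes simp: pi F_def)
    qed
    show "F' ` {\<pi>. \<pi> permutes C} \<subseteq> {\<phi>\<in>PiE A (\<lambda>_. C). \<phi> ` A = C}"
    proof
      fix \<phi> assume "\<phi> \<in> F' ` {\<pi>. \<pi> permutes C}"
      then obtain \<pi> where p: "\<pi> permutes C" and phi: "\<phi> = F' \<pi>" by auto
      have "\<phi> ` A = \<pi> ` (inv_into C h ` A)" unfolding phi F'_def by (auto simp: image_iff)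
      also have "inv_into C h ` A = C" using bij_betw_inv_into[OF h] by (simp add: bij_betw_def)
      also have "\<pi> ` C = C" using p by (simp add: permutes_image)
      finally have "\<phi> ` A = C" .
      moreover have "\<phi> \<in> PiE A (\<lambda>_. C)" using p hinv3 unfolding phi F'_def
        by (auto simp: permutes_in_image)
      ultimately show "\<phi> \<in> {\<phi>\<in>PiE A (\<lambda>_. C). \<phi> ` A = C}" by simp
    qed
  qed
  then have "card {\<phi>\<in>PiE A (\<lambda>_. C). \<phi> ` A = C} = card {\<pi>. \<pi> permutes C}" by (rule bij_betw_same_card)
  also have "\<dots> = fact (card C)" using fC by (simp add: card_permutations)
  finally show ?thesis .
qed

lemma mobius_step:
  fixes X :: "('a \<Rightarrow> nat) \<Rightarrow> complex"
  assumes fT: "finite T"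
  shows "(\<Sum>S\<in>Pow {..<m}. (-1)^(m - card S) * (\<Sum>\<phi>\<in>PiE T (\<lambda>_. S). X \<phi>))
       = (\<Sum>\<phi>\<in>{\<phi>\<in>PiE T (\<lambda>_. {..<m}). \<phi> ` T = {..<m}}. X \<phi>)"
proof -
  define f where "f U = (\<Sum>\<phi>\<in>{\<phi>\<in>PiE T (\<lambda>_. U). \<phi> ` T = U}. X \<phi>)" for U
  define g where "g U = (\<Sum>\<phi>\<in>PiE T (\<lambda>_. U). X \<phi>)" for U
  have "g U = sum f (Pow U)" if fU: "finite U" for U
  proof -
    have fP: "finite (PiE T (\<lambda>_. U))" using fT fU by (simp add: finite_PiE)
    have "g U = (\<Sum>V\<in>Pow U. \<Sum>\<phi>\<in>{\<phi>. \<phi> \<in> PiE T (\<lambda>_. U) \<and> \<phi> ` T = V}. X \<phi>)"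
      unfolding g_def by (rule sum.group[symmetric, OF fP]) (use fU in \<open>auto simp: PiE_iff\<close>)
    also have "\<dots> = sum f (Pow U)"
    proof (rule sum.cong[OF refl])
      fix V assume "V \<in> Pow U"
      then have "{\<phi>. \<phi> \<in> PiE T (\<lambda>_. U) \<and> \<phi> ` T = V} = {\<phi>\<in>PiE T (\<lambda>_. V). \<phi> ` T = V}"
        by (auto simp: PiE_iff)
      then show "(\<Sum>\<phi>\<in>{\<phi>. \<phi> \<in> PiE T (\<lambda>_. U) \<and> \<phi> ` T = V}. X \<phi>) = f V" by (simp add: f_def)
    qed
    finally show ?thesis .
  qed
  then have "f {..<m} = (\<Sum>S\<in>Pow {..<m}. (-1) ^ (card {..<m} - card S) * g S)"
    by (intro inclusion_exclusion_mobius) auto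
  then show ?thesis by (simp add: f_def g_def)
qed



lemma card_filter_sum: "finite S \<Longrightarrow> (of_nat (card {q\<in>S. P q}) :: complex) = (\<Sum>q\<in>S. if P q then 1 else 0)"
  by (simp add: sum.If_cases Int_def conj_commute)

lemma polar_mono:
  fixes lam :: "nat \<Rightarrow> complex" and p :: "nat \<Rightarrow> nat"
  assumes p: "sum p {..<n} = m"
  shows "(\<Sum>xs\<in>{xs. set xs \<subseteq> {..<n} \<and> length xs = m}.
     (\<Sum>S\<in>Pow{..<m}. (-1)^(m - card S) * (\<Prod>i<n. (of_nat (card {q\<in>S. xs!q = i}) :: complex) ^ p i))
     * (\<Prod>q<m. lam (xs!q))) = fact m * (\<Prod>i<n. lam i ^ p i)"
proof -
  define T where "T = Sigma {..<n} (\<lambda>i. {..<p i})"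
  define L where "L = {xs. set xs \<subseteq> {..<n} \<and> length xs = m}"
  define X where "X xs \<phi> = (\<Prod>\<tau>\<in>T. if xs!(\<phi> \<tau>) = fst \<tau> then 1 else (0::complex))" for xs \<phi>
  define B where "B = {\<phi>\<in>PiE T (\<lambda>_. {..<m}). \<phi> ` T = {..<m}}"
  have fT: "finite T" unfolding T_def by simp
  have fL: "finite L" unfolding L_def by (simp add: finite_lists_length_eq)
  have fB: "finite B" unfolding B_def using fT by (simp add: finite_PiE)
  have cT: "card T = m" unfolding T_def using p by simp
  have monT: "(\<Prod>i<n. c i ^ p i) = (\<Prod>\<tau>\<in>T. c (fst \<tau>))" for c :: "nat \<Rightarrow> complex"
  proof -
    have "(\<Prod>i<n. c i ^ p i) = (\<Prod>i<n. \<Prod>t<p i. c i)" by simp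
    also have "\<dots> = (\<Prod>\<tau>\<in>T. c (fst \<tau>))" unfolding T_def
      by (subst prod.Sigma) (auto simp: case_prod_beta)
    finally show ?thesis .
  qed
  have step1: "(\<Prod>i<n. (of_nat (card {q\<in>S. xs!q = i}) :: complex) ^ p i) = (\<Sum>\<phi>\<in>PiE T (\<lambda>_. S). X xs \<phi>)"
    if S: "S \<subseteq> {..<m}" for S xs
  proof -
    have fS: "finite S" using S finite_subset by blast
    have "(\<Prod>i<n. (of_nat (card {q\<in>S. xs!q = i}) :: complex) ^ p i)
        = (\<Prod>\<tau>\<in>T. \<Sum>q\<in>S. if xs!q = fst \<tau> then 1 else 0)"
      by (subst monT) (simp add: card_filter_sum[OF fS])
    also have "\<dots> = (\<Sum>\<phi>\<in>PiE T (\<lambda>_. S). X xs \<phi>)"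
      unfolding X_def by (rule prod_sum_PiE[OF fT fS])
    finally show ?thesis .
  qed
  have step3: "(\<Sum>xs\<in>L. X xs \<phi> * (\<Prod>q<m. lam (xs!q))) = (\<Prod>\<tau>\<in>T. lam (fst \<tau>))" if \<phi>: "\<phi> \<in> B" for \<phi>
  proof -
    have img: "\<phi> ` T = {..<m}" using \<phi> by (simp add: B_def)
    have inj: "inj_on \<phi> T" using fT img cT by (intro eq_card_imp_inj_on) auto
    have bij: "bij_betw \<phi> T {..<m}" using inj img by (simp add: bij_betw_def)
    define xs0 where "xs0 = map (\<lambda>q. fst (inv_into T \<phi> q)) [0..<m]"
    have invT: "inv_into T \<phi> q \<in> T" if "q < m" for q using img that by (metis inv_into_into lessThan_iff)
    have fstn: "fst (inv_into T \<phi> q) < n" if "q < m" for q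
      using invT[OF that] unfolding T_def by (cases "inv_into T \<phi> q") auto
    have xs0L: "xs0 \<in> L" unfolding L_def xs0_def using fstn by auto
    have Xiff: "X xs \<phi> = (if xs = xs0 then 1 else 0)" if xs: "xs \<in> L" for xs
    proof -
      have "(\<forall>\<tau>\<in>T. xs!(\<phi> \<tau>) = fst \<tau>) \<longleftrightarrow> xs = xs0"
      proof
        assume H: "\<forall>\<tau>\<in>T. xs!(\<phi> \<tau>) = fst \<tau>"
        show "xs = xs0"
        proof (rule nth_equalityI)
          show "length xs = length xs0" using xs by (simp add: L_def xs0_def)
          fix q assume "q < length xs"
          then have q: "q < m" using xs by (simp add: L_def)
          have "\<phi> (inv_into T \<phi> q) = q" using img q by (simp add: f_inv_into_f)
          then show "xs ! q = xs0 ! q" using H invT[OF q] q by (auto simp: xs0_def)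
        qed
      next
        assume "xs = xs0"
        show "\<forall>\<tau>\<in>T. xs!(\<phi> \<tau>) = fst \<tau>"
        proof
          fix \<tau> assume t: "\<tau> \<in> T"
          then have "\<phi> \<tau> < m" using img by auto
          then show "xs!(\<phi> \<tau>) = fst \<tau>" using \<open>xs = xs0\<close> inj t by (simp add: xs0_def inv_into_f_f)
        qed
      qed
      then show ?thesis unfolding X_def by (simp add: prod_indic[OF fT])
    qed
    have "(\<Sum>xs\<in>L. X xs \<phi> * (\<Prod>q<m. lam (xs!q))) = (\<Sum>xs\<in>L. if xs = xs0 then (\<Prod>q<m. lam (xs!q)) else 0)"
      by (rule sum.cong[OF refl]) (simp add: Xiff)
    also have "\<dots> = (\<Prod>q<m. lam (xs0!q))" using xs0L fL by simp
    also have "\<dots> = (\<Prod>q<m. lam (fst (inv_into T \<phi> q)))" by (simp add: xs0_def)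
    also have "\<dots> = (\<Prod>\<tau>\<in>T. lam (fst (inv_into T \<phi> (\<phi> \<tau>))))"
      by (rule prod.reindex_bij_betw[OF bij, symmetric])
    also have "\<dots> = (\<Prod>\<tau>\<in>T. lam (fst \<tau>))" using inj by (simp add: inv_into_f_f)
    finally show ?thesis .
  qed
  have "(\<Sum>xs\<in>L. (\<Sum>S\<in>Pow{..<m}. (-1)^(m - card S) * (\<Prod>i<n. (of_nat (card {q\<in>S. xs!q = i}) :: complex) ^ p i))
     * (\<Prod>q<m. lam (xs!q))) = (\<Sum>xs\<in>L. (\<Sum>\<phi>\<in>B. X xs \<phi>) * (\<Prod>q<m. lam (xs!q)))"
  proof (rule sum.cong[OF refl])
    fix xs assume "xs \<in> L"
    have "(\<Sum>S\<in>Pow{..<m}. (-1)^(m - card S) * (\<Prod>i<n. (of_nat (card {q\<in>S. xs!q = i}) :: complex) ^ p i))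
      = (\<Sum>S\<in>Pow{..<m}. (-1)^(m - card S) * (\<Sum>\<phi>\<in>PiE T (\<lambda>_. S). X xs \<phi>))"
      by (rule sum.cong[OF refl]) (simp add: step1)
    also have "\<dots> = (\<Sum>\<phi>\<in>B. X xs \<phi>)" unfolding B_def by (rule mobius_step[OF fT])
    finally show "(\<Sum>S\<in>Pow{..<m}. (-1)^(m - card S) * (\<Prod>i<n. (of_nat (card {q\<in>S. xs!q = i}) :: complex) ^ p i))
     * (\<Prod>q<m. lam (xs!q)) = (\<Sum>\<phi>\<in>B. X xs \<phi>) * (\<Prod>q<m. lam (xs!q))" by simp
  qed
  also have "\<dots> = (\<Sum>\<phi>\<in>B. \<Sum>xs\<in>L. X xs \<phi> * (\<Prod>q<m. lam (xs!q)))"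
    by (simp add: sum_distrib_right sum.swap[of _ L])
  also have "\<dots> = (\<Sum>\<phi>\<in>B. \<Prod>\<tau>\<in>T. lam (fst \<tau>))" by (rule sum.cong[OF refl]) (simp add: step3)
  also have "\<dots> = of_nat (card B) * (\<Prod>\<tau>\<in>T. lam (fst \<tau>))" by simp
  also have "card B = fact m" unfolding B_def using card_surj[OF fT, of "{..<m}"] cT by simp
  finally show ?thesis unfolding L_def by (simp add: monT)
qed



definition Dmat :: "nat \<Rightarrow> (nat \<Rightarrow> complex) \<Rightarrow> complex mat" where
  "Dmat n c = mat n n (\<lambda>(i,l). if i = l then c i else 0)"

definition geo :: "complex \<Rightarrow> complex fps" where "geo z = Abs_fps (\<lambda>a. z ^ a)"

lemma Dmat_pow: "Dmat n c ^\<^sub>m a = Dmat n (\<lambda>i. c i ^ a)"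
proof (induction a)
  case 0 then show ?case by (auto simp: Dmat_def one_mat_def)
next
  case (Suc a)
  have "Dmat n (\<lambda>i. c i ^ a) * Dmat n c = Dmat n (\<lambda>i. c i ^ Suc a)"
  proof (rule eq_matI)
    fix i l assume "i < dim_row (Dmat n (\<lambda>i. c i ^ Suc a))" "l < dim_col (Dmat n (\<lambda>i. c i ^ Suc a))"
    then have il: "i < n" "l < n" by (auto simp: Dmat_def)
    have "(Dmat n (\<lambda>i. c i ^ a) * Dmat n c) $$ (i, l)
       = (\<Sum>k\<in>{0..<n}. (if i = k then c i ^ a else 0) * (if k = l then c k else 0))"
      using il by (simp add: Dmat_def scalar_prod_def)
    also have "\<dots> = (\<Sum>k\<in>{0..<n}. if k = i then (if i = l then c i ^ a * c i else 0) else 0)"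
      by (rule sum.cong) auto
    also have "\<dots> = (if i = l then c i ^ Suc a else 0)" using il by (simp add: mult.commute)
    finally show "(Dmat n (\<lambda>i. c i ^ a) * Dmat n c) $$ (i, l) = Dmat n (\<lambda>i. c i ^ Suc a) $$ (i, l)"
      using il by (simp add: Dmat_def)
  qed (auto simp: Dmat_def)
  then show ?case using Suc by simp
qed

lemma geo_inv: "inverse (1 - fps_const z * fps_X) = geo z"
proof (rule fps_inverse_unique)
  show "(1 - fps_const z * fps_X) * geo z = 1"
  proof (rule fps_ext)
    fix k
    have e: "(1 - fps_const z * fps_X) * geo z = geo z - fps_const z * (fps_X * geo z)"
      by (simp only: left_diff_distrib mult.assoc mult_1_left)
    show "fps_nth ((1 - fps_const z * fps_X) * geo z) k = fps_nth 1 k"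
      unfolding e by (cases k) (simp_all add: geo_def)
  qed
qed

lemma det_D: "det (mat n n (\<lambda>(i, l). (if i = l then 1 else 0) - fps_const (Dmat n c $$ (i, l)) * fps_X))
   = (\<Prod>i<n. 1 - fps_const (c i) * fps_X)"
proof -
  have M: "mat n n (\<lambda>(i, l). (if i = l then 1 else 0) - fps_const (Dmat n c $$ (i, l)) * fps_X)
      = mat n n (\<lambda>(i, l). if i = l then 1 - fps_const (c i) * fps_X else 0)"
    by (rule eq_matI) (auto simp: Dmat_def)
  have "det (mat n n (\<lambda>(i, l). if i = l then 1 - fps_const (c i) * fps_X else 0)) =
     prod_list (diag_mat (mat n n (\<lambda>(i, l). if i = l then 1 - fps_const (c i) * fps_X else (0::complex fps))))"
    by (rule det_upper_triangular) (auto simp: upper_triangular_def)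
  also have "\<dots> = (\<Prod>i<n. 1 - fps_const (c i) * fps_X)"
    by (simp add: prod_list_diag_prod atLeast0LessThan)
  finally show ?thesis using M by simp
qed

lemma coef_D: "j < n \<Longrightarrow> coef_fun n j m (Dmat n c) = fps_nth (geo (c j) * (\<Prod>i<n. geo (c i))) m"
proof -
  assume j: "j < n"
  have "Abs_fps (\<lambda>a. (Dmat n c ^\<^sub>m a) $$ (j, j)) = geo (c j)"
    using j unfolding Dmat_pow by (simp add: Dmat_def geo_def)
  moreover have "inverse (\<Prod>i<n. 1 - fps_const (c i) * fps_X) = (\<Prod>i<n. geo (c i))"
    by (simp add: inverse_prod_fps geo_inv)
  ultimately show ?thesis unfolding coef_fun_def det_D by simp
qed

lemma sum_upd: "j \<in> A \<Longrightarrow> finite A \<Longrightarrow> sum (p(j:=x)) A = x + sum p (A - {j})"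
  by (simp add: sum.remove[of A j] )

lemma prod_upd: "j \<in> A \<Longrightarrow> finite A \<Longrightarrow> (\<Prod>i\<in>A. (c i :: complex) ^ (p(j:=x)) i) = c j ^ x * (\<Prod>i\<in>A - {j}. c i ^ p i)"
  by (simp add: prod.remove[of A j])

lemma multi_idx_0: "multi_idx 0 k = (if k = 0 then {\<lambda>_. 0} else {})"
  by (auto simp: multi_idx_def)

lemma finite_multi_idx: "finite (multi_idx n k)"
  by (rule finite_subset[OF _ finite_Pd[of n "Suc k"]]) (auto simp: multi_idx_def Pd_def)

lemma coef_prod_geo: "fps_nth (\<Prod>i<n. geo (c i)) k = (\<Sum>p\<in>multi_idx n k. \<Prod>i<n. c i ^ p i)"
proof (induction n arbitrary: k)
  case 0 then show ?case by (simp add: multi_idx_0)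
next
  case (Suc n)
  have "fps_nth (\<Prod>i<Suc n. geo (c i)) k = (\<Sum>a=0..k. fps_nth (\<Prod>i<n. geo (c i)) a * c n ^ (k - a))"
    by (simp add: fps_mult_nth geo_def)
  also have "\<dots> = (\<Sum>a=0..k. \<Sum>p\<in>multi_idx n a. (\<Prod>i<n. c i ^ p i) * c n ^ (k - a))"
    by (simp add: Suc sum_distrib_right)
  also have "\<dots> = (\<Sum>(a,p)\<in>Sigma {0..k} (\<lambda>a. multi_idx n a). (\<Prod>i<n. c i ^ p i) * c n ^ (k - a))"
    by (rule sum.Sigma) (auto simp: finite_multi_idx)
  also have "\<dots> = (\<Sum>p\<in>multi_idx (Suc n) k. \<Prod>i<Suc n. c i ^ p i)"
  proof (rule sum.reindex_bij_witness[where i="\<lambda>q. (k - q n, q(n:=0))" and j="\<lambda>(a,p). p(n := k - a)"])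
    fix ap assume "ap \<in> Sigma {0..k} (multi_idx n)"
    then obtain a p where ap: "ap = (a,p)" "a \<le> k" "\<forall>i\<ge>n. p i = 0" "sum p {..<n} = a"
      by (auto simp: multi_idx_def)
    have pn: "p n = 0" using ap by simp
    have eqs: "(p(n := k - a)) i = p i" if "i < n" for i using that by simp
    show "(\<lambda>q. (k - q n, q(n:=0))) ((\<lambda>(a,p). p(n := k - a)) ap) = ap"
      using ap pn by (auto simp: fun_eq_iff)
    have "sum (p(n := k - a)) {..<Suc n} = k"
      using ap by (simp add: sum.cong[OF refl eqs])
    then show "(\<lambda>(a,p). p(n := k - a)) ap \<in> multi_idx (Suc n) k"
      using ap by (auto simp: multi_idx_def)
    show "(\<Prod>i<Suc n. c i ^ ((\<lambda>(a,p). p(n := k - a)) ap) i) = (case ap of (a,p) \<Rightarrow> (\<Prod>i<n. c i ^ p i) * c n ^ (k - a))"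
    proof -
      have "(\<Prod>i<n. c i ^ (p(n := k - a)) i) = (\<Prod>i<n. c i ^ p i)" by (rule prod.cong) auto
      then show ?thesis using ap by simp
    qed
  next
    fix q assume q: "q \<in> multi_idx (Suc n) k"
    then have q0: "\<forall>i\<ge>Suc n. q i = 0" and qs: "sum q {..<n} + q n = k" by (auto simp: multi_idx_def)
    have eqs: "(q(n := 0)) i = q i" if "i < n" for i using that by simp
    show "(\<lambda>(a,p). p(n := k - a)) ((\<lambda>q. (k - q n, q(n:=0))) q) = q"
      using qs by (auto simp: fun_eq_iff)
    show "(\<lambda>q. (k - q n, q(n:=0))) q \<in> Sigma {0..k} (multi_idx n)"
      using q0 qs by (auto simp: multi_idx_def sum.cong[OF refl eqs] Suc_le_eq)
  qed
  finally show ?case .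
qed



lemma coef_final:
  assumes jn: "j < n"
  shows "fps_nth (geo (c j) * (\<Prod>i<n. geo (c i))) m = (\<Sum>p\<in>multi_idx n m. of_nat (p j + 1) * (\<Prod>i<n. c i ^ p i))"
proof -
  define R where "R p = (\<Prod>i\<in>{..<n}-{j}. c i ^ p i)" for p :: "nat \<Rightarrow> nat"
  define Q where "Q p = sum p ({..<n}-{j})" for p :: "nat \<Rightarrow> nat"
  have jA: "j \<in> {..<n}" using jn by simp
  have monR: "(\<Prod>i<n. c i ^ p i) = c j ^ p j * R p" for p
    unfolding R_def by (rule prod.remove[OF _ jA]) simp
  have monU: "(\<Prod>i<n. c i ^ (p(j:=x)) i) = c j ^ x * R p" for p x
    unfolding R_def by (rule prod_upd[OF jA]) simp
  have sR: "sum p {..<n} = p j + Q p" for p unfolding Q_def by (rule sum.remove[OF _ jA]) simp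
  have sU: "sum (p(j:=x)) {..<n} = x + Q p" for p x unfolding Q_def by (rule sum_upd[OF jA]) simp
  have RU: "R (p(j:=x)) = R p" for p x unfolding R_def by (rule prod.cong) auto
  have QU: "Q (p(j:=x)) = Q p" for p x unfolding Q_def by (rule sum.cong) auto
  have "fps_nth (geo (c j) * (\<Prod>i<n. geo (c i))) m = (\<Sum>a=0..m. c j ^ a * fps_nth (\<Prod>i<n. geo (c i)) (m - a))"
    by (simp add: fps_mult_nth geo_def)
  also have "\<dots> = (\<Sum>a=0..m. \<Sum>p\<in>multi_idx n (m - a). c j ^ a * (\<Prod>i<n. c i ^ p i))"
    by (simp add: coef_prod_geo sum_distrib_left)
  also have "\<dots> = (\<Sum>(a,p)\<in>Sigma {0..m} (\<lambda>a. multi_idx n (m - a)). c j ^ a * (\<Prod>i<n. c i ^ p i))"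
    by (rule sum.Sigma) (auto simp: finite_multi_idx)
  also have "\<dots> = (\<Sum>(p,b)\<in>Sigma (multi_idx n m) (\<lambda>p. {0..p j}). (\<Prod>i<n. c i ^ p i))"
  proof (rule sum.reindex_bij_witness[where i="\<lambda>(q,b). (b, q(j := q j - b))" and j="\<lambda>(a,p). (p(j := p j + a), a)"])
    fix ap assume "ap \<in> Sigma {0..m} (\<lambda>a. multi_idx n (m - a))"
    then obtain a p where ap: "ap = (a,p)" "a \<le> m" "\<forall>i\<ge>n. p i = 0" "sum p {..<n} = m - a"
      by (auto simp: multi_idx_def)
    show "(\<lambda>(q,b). (b, q(j := q j - b))) ((\<lambda>(a,p). (p(j := p j + a), a)) ap) = ap"
      using ap by (auto simp: fun_eq_iff)
    show "(\<lambda>(a,p). (p(j := p j + a), a)) ap \<in> Sigma (multi_idx n m) (\<lambda>p. {0..p j})"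
      using ap jn sR[of p] sU[of p "p j + a"] by (auto simp: multi_idx_def)
    show "(case (\<lambda>(a,p). (p(j := p j + a), a)) ap of (p,b) \<Rightarrow> \<Prod>i<n. c i ^ p i) = (case ap of (a,p) \<Rightarrow> c j ^ a * (\<Prod>i<n. c i ^ p i))"
      using ap by (simp add: monU monR power_add mult_ac RU)
  next
    fix qb assume "qb \<in> Sigma (multi_idx n m) (\<lambda>p. {0..p j})"
    then obtain q b where qb: "qb = (q,b)" "b \<le> q j" "\<forall>i\<ge>n. q i = 0" "sum q {..<n} = m"
      by (auto simp: multi_idx_def)
    show "(\<lambda>(a,p). (p(j := p j + a), a)) ((\<lambda>(q,b). (b, q(j := q j - b))) qb) = qb"
      using qb by (auto simp: fun_eq_iff)
    show "(\<lambda>(q,b). (b, q(j := q j - b))) qb \<in> Sigma {0..m} (\<lambda>a. multi_idx n (m - a))"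
      using qb jn sR[of q] sU[of q "q j - b"] by (auto simp: multi_idx_def)
  qed
  also have "\<dots> = (\<Sum>p\<in>multi_idx n m. \<Sum>b\<in>{0..p j}. (\<Prod>i<n. c i ^ p i))"
    by (rule sum.Sigma[symmetric]) (auto simp: finite_multi_idx)
  also have "\<dots> = (\<Sum>p\<in>multi_idx n m. of_nat (p j + 1) * (\<Prod>i<n. c i ^ p i))"
    by simp
  finally show ?thesis .
qed



lemma main_D: "j < n \<Longrightarrow> (\<Sum>w\<in>words n m. r_elem n j m w * dg w lam) = (\<Sum>p\<in>multi_idx n m. of_nat (p j + 1) * (\<Prod>i<n. lam i ^ p i))"
proof -
  assume jn: "j < n"
  define L where "L = {xs. set xs \<subseteq> {..<n} \<and> length xs = m}"
  define diagw where "diagw xs = map (\<lambda>x. (x,x)) xs" for xs :: "nat list"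
  define N where "N xs S = (\<lambda>i. of_nat (card {q\<in>S. xs!q = i}) :: complex)" for xs :: "nat list" and S :: "nat set"
  define a where "a p = (of_nat (p j + 1) :: complex)" for p :: "nat \<Rightarrow> nat"
  define E where "E p xs = (\<Sum>S\<in>Pow{..<m}. (-1)^(m - card S) * (\<Prod>i<n. N xs S i ^ p i))" for p :: "nat \<Rightarrow> nat" and xs
  have fL: "finite L" unfolding L_def by (simp add: finite_lists_length_eq)
  have inj: "inj_on diagw L" unfolding diagw_def by (rule inj_onI) (auto dest: map_injective simp: inj_on_def)
  have sub: "diagw ` L \<subseteq> words n m" by (auto simp: L_def diagw_def words_def)
  have "(\<Sum>w\<in>words n m. r_elem n j m w * dg w lam) = (\<Sum>w\<in>diagw ` L. r_elem n j m w * dg w lam)"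
  proof (rule sum.mono_neutral_right[OF finite_words sub])
    show "\<forall>w\<in>words n m - diagw ` L. r_elem n j m w * dg w lam = 0"
    proof
      fix w assume w: "w \<in> words n m - diagw ` L"
      show "r_elem n j m w * dg w lam = 0"
      proof (cases "\<forall>x\<in>set w. fst x = snd x")
        case True
        then have "diagw (map fst w) = w" unfolding diagw_def by (induction w) (auto simp: prod_eq_iff)
        moreover have "map fst w \<in> L" using w by (auto simp: L_def words_def)
        ultimately show ?thesis using w by force
      qed (auto simp: dg_def)
    qed
  qed
  also have "\<dots> = (\<Sum>xs\<in>L. r_elem n j m (diagw xs) * dg (diagw xs) lam)"
    using sum.reindex[OF inj, of "\<lambda>w. r_elem n j m w * dg w lam"] by (simp add: comp_def)
  also have "\<dots> = (\<Sum>xs\<in>L. (\<Sum>p\<in>multi_idx n m. a p * E p xs) / fact m * (\<Prod>q<m. lam (xs!q)))"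
  proof (rule sum.cong[OF refl])
    fix xs assume xs: "xs \<in> L"
    then have len: "length xs = m" by (simp add: L_def)
    have dgw: "dg (diagw xs) lam = (\<Prod>q<m. lam (xs!q))"
      using len by (simp add: dg_def diagw_def comp_def prod.list_conv_set_nth atLeast0LessThan)
    have matN: "mat n n (\<lambda>(i, l). of_nat (card {q\<in>S. diagw xs ! q = (l, i)})) = Dmat n (N xs S)"
      if S: "S \<subseteq> {..<m}" for S
    proof -
      have "card {q\<in>S. diagw xs ! q = (l, i)} = (if i = l then card {q\<in>S. xs!q = i} else 0)" for i l
      proof -
        have "{q\<in>S. diagw xs ! q = (l, i)} = (if i = l then {q\<in>S. xs!q = i} else {})"
          using S len by (auto simp: diagw_def)
        then show ?thesis by simp
      qed
      then show ?thesis unfolding Dmat_def N_def by (intro arg_cong[where f="mat n n"]) (auto simp: fun_eq_iff)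
    qed
    have "polar n m (coef_fun n j m) (diagw xs) = (\<Sum>S\<in>Pow {..<m}. (-1)^(m - card S) * coef_fun n j m (Dmat n (N xs S)))"
      unfolding polar_def by (rule sum.cong[OF refl]) (simp add: matN)
    also have "\<dots> = (\<Sum>S\<in>Pow {..<m}. (-1)^(m - card S) * (\<Sum>p\<in>multi_idx n m. a p * (\<Prod>i<n. N xs S i ^ p i)))"
      by (simp add: coef_D[OF jn] coef_final[OF jn] a_def)
    also have "\<dots> = (\<Sum>p\<in>multi_idx n m. a p * E p xs)"
      unfolding E_def by (simp add: sum_distrib_left sum.swap[of _ "Pow {..<m}"] mult_ac)
    finally have "polar n m (coef_fun n j m) (diagw xs) = (\<Sum>p\<in>multi_idx n m. a p * E p xs)" .
    moreover have "diagw xs \<in> words n m" using sub xs by auto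
    ultimately show "r_elem n j m (diagw xs) * dg (diagw xs) lam = (\<Sum>p\<in>multi_idx n m. a p * E p xs) / fact m * (\<Prod>q<m. lam (xs!q))"
      by (simp add: r_elem_def dgw)
  qed
  also have "\<dots> = (\<Sum>p\<in>multi_idx n m. a p / fact m * (\<Sum>xs\<in>L. E p xs * (\<Prod>q<m. lam (xs!q))))"
    by (simp add: sum_distrib_left sum_distrib_right sum_divide_distrib sum.swap[of _ L] mult_ac)
  also have "\<dots> = (\<Sum>p\<in>multi_idx n m. a p / fact m * (fact m * (\<Prod>i<n. lam i ^ p i)))"
  proof (rule sum.cong[OF refl])
    fix p assume "p \<in> multi_idx n m"
    then have "sum p {..<n} = m" by (simp add: multi_idx_def)
    from polar_mono[OF this, of lam] show "a p / fact m * (\<Sum>xs\<in>L. E p xs * (\<Prod>q<m. lam (xs!q)))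
      = a p / fact m * (fact m * (\<Prod>i<n. lam i ^ p i))"
      by (simp add: E_def N_def L_def)
  qed
  also have "\<dots> = (\<Sum>p\<in>multi_idx n m. of_nat (p j + 1) * (\<Prod>i<n. lam i ^ p i))"
    by (simp add: a_def)
  finally show ?thesis .
qed

theorem lemma2p6:
  fixes n m j :: nat and zeta :: "nat \<Rightarrow> complex"
  assumes "j < n"
  shows "\<exists>R. poly_deg_lt n m R \<and>
    (\<forall>lam. HC (bracket_yx n m zeta j) lam =
       zeta m * (\<Sum>p\<in>multi_idx n m. of_nat (p j + 1) * (\<Prod>i<n. lam i ^ p i)) + R lam)"
proof (intro exI conjI allI)
  define R where "R lam = (\<Sum>k<m. zeta k * (\<Sum>w\<in>words n k. r_elem n j k w * hcw lam w))
     + zeta m * (\<Sum>w\<in>words n m. r_elem n j m w * (hcw lam w - dg w lam))" for lam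
  have "polyd n m R"
    unfolding R_def[abs_def]
  proof (intro padd psmul psum)
    fix k w assume k: "k \<in> {..<m}" and w: "w \<in> words n k"
    have "polyd n (Suc k) (\<lambda>lam. hcw lam w)" using hcw_deg[OF words_set[OF w]] words_len[OF w] by simp
    then show "polyd n m (\<lambda>lam. hcw lam w)" using k by (auto intro: pmono)
  next
    fix w assume w: "w \<in> words n m"
    show "polyd n m (\<lambda>lam. hcw lam w - dg w lam)" using hcw_main[OF words_set[OF w]] words_len[OF w] by simp
  qed (auto simp: finite_words)
  then show "poly_deg_lt n m R" by (rule polyd_sound)
  fix lam
  have "HC (bracket_yx n m zeta j) lam = (\<Sum>k<m. zeta k * (\<Sum>w\<in>words n k. r_elem n j k w * hcw lam w))
     + zeta m * (\<Sum>w\<in>words n m. r_elem n j m w * hcw lam w)"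
    unfolding HC_bracket by (simp add: lessThan_Suc_atMost[symmetric])
  also have "(\<Sum>w\<in>words n m. r_elem n j m w * hcw lam w) = (\<Sum>w\<in>words n m. r_elem n j m w * (hcw lam w - dg w lam))
     + (\<Sum>w\<in>words n m. r_elem n j m w * dg w lam)"
    by (simp add: sum.distrib[symmetric] algebra_simps)
  finally show "HC (bracket_yx n m zeta j) lam =
       zeta m * (\<Sum>p\<in>multi_idx n m. of_nat (p j + 1) * (\<Prod>i<n. lam i ^ p i)) + R lam"
    unfolding R_def main_D[OF assms] by (simp add: algebra_simps)
qed

end
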